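(* Let $A$ be a complete filtered associative algebra over a field $\mathbb{K}$ of characteristic zero, and let $P:A\to A$ be a linear map preserving the filtration, i.e. $P(A_n)\subseteq A_n$ for all $n$. Put $\tilde P:=\mathrm{id}_A-P$. Then there exists a unique (in general non-linear) map $\chi:A_1\to A_1$ such that $(\chi-\mathrm{id}_A)(A_i)\subseteq A_{2i}$ for every $i\ge 1$ and $$\forall a\in A_1:\quad a=C\big(P(\chi(a)),\,\tilde P(\chi(a))\big).$$ Moreover $\chi$ is bijective, and its inverse is $$\chi^{-1}(a)=C\big(P(a),\tilde P(a)\big)=a+\mathrm{BCH}\big(P(a),\tilde P(a)\big),\qquad a\in A_1.$$
   Context: A complete filtered associative algebra is an associative $\mathbb{K}$-algebra $A$ with a decreasing filtration $A=A_0\supseteq A_1\supseteq A_2\supseteq\cdots$ by subalgebras such that $A_mA_n\subseteq A_{m+n}$ and $A\cong\varprojlim A/A_n$. On $A_1$ the maps $\exp:A_1\to 1+A_1$, $\exp(a)=\sum_{n\ge0}a^n/n!$, and $\log:1+A_1\to A_1$, $\log(1+a)=-\sum_{n\ge1}(-a)^n/n$, are mutually inverse bijections. $\mathrm{BCH}(x,y)$ denotes the Baker--Campbell--Hausdorff series, i.e. the element of the free complete algebra $\mathbb{Q}\langle\langle x,y\rangle\rangle$ with $\exp(x)\exp(y)=\exp(x+y+\mathrm{BCH}(x,y))$; it is a series of iterated commutators $[u,v]=uv-vu$ beginning $\tfrac12[x,y]+\tfrac1{12}[x,[x,y]]-\tfrac1{12}[y,[x,y]]+\cdots$. For $u,v\in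 A_1$ put $C(u,v):=u+v+\mathrm{BCH}(u,v)=\log(\exp(u)\exp(v))\in A_1$. *)

theory Defs
  imports Main
begin

definition flim :: "(nat \<Rightarrow> 'a::ab_group_add set) \<Rightarrow> (nat \<Rightarrow> 'a) \<Rightarrow> 'a \<Rightarrow> bool" where
  "flim F s x \<longleftrightarrow> (\<forall>N. \<exists>M. \<forall>n\<ge>M. s n - x \<in> F N)"

definition fseries :: "(nat \<Rightarrow> 'a::ab_group_add set) \<Rightarrow> (nat \<Rightarrow> 'a) \<Rightarrow> 'a" where
  "fseries F s = (THE x. flim F (\<lambda>n. \<Sum>k<n. s k) x)"

definition fexp :: "('k::field_char_0 \<Rightarrow> 'a::ring_1 \<Rightarrow> 'a) \<Rightarrow> (nat \<Rightarrow> 'a set) \<Rightarrow> 'a \<Rightarrow> 'a" where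
  "fexp scale F a = fseries F (\<lambda>k. scale (1 / fact k) (a ^ k))"

definition flog :: "('k::field_char_0 \<Rightarrow> 'a::ring_1 \<Rightarrow> 'a) \<Rightarrow> (nat \<Rightarrow> 'a set) \<Rightarrow> 'a \<Rightarrow> 'a" where
  "flog scale F y = fseries F
     (\<lambda>k. if k = 0 then 0 else - scale (1 / of_nat k) ((- (y - 1)) ^ k))"

text \<open>C(u,v) = log(exp u exp v) = u + v + BCH(u,v)\<close>
definition fC :: "('k::field_char_0 \<Rightarrow> 'a::ring_1 \<Rightarrow> 'a) \<Rightarrow> (nat \<Rightarrow> 'a set) \<Rightarrow> 'a \<Rightarrow> 'a \<Rightarrow> 'a" where
  "fC scale F u v = flog scale F (fexp scale F u * fexp scale F v)"

locale complete_filtered_algebra =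
  fixes scale :: "'k::field_char_0 \<Rightarrow> 'a::ring_1 \<Rightarrow> 'a"
    and F :: "nat \<Rightarrow> 'a set"
  assumes scale_right_distrib: "scale c (x + y) = scale c x + scale c y"
    and scale_left_distrib: "scale (c + d) x = scale c x + scale d x"
    and scale_scale: "scale c (scale d x) = scale (c * d) x"
    and scale_one: "scale 1 x = x"
    and scale_mult_left: "scale c (x * y) = scale c x * y"
    and scale_mult_right: "scale c (x * y) = x * scale c y"
    and F_0: "F 0 = UNIV"
    and F_decr: "F (Suc n) \<subseteq> F n"
    and F_zero: "0 \<in> F n"
    and F_add: "x \<in> F n \<Longrightarrow> y \<in> F n \<Longrightarrow> x + y \<in> F n"
    and F_scale: "x \<in> F n \<Longrightarrow> scale c x \<in> F n"
    and F_mult: "x \<in> F m \<Longrightarrow> y \<in> F n \<Longrightarrow> x * y \<in> F (m + n)"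
    and separated: "(\<forall>n. x \<in> F n) \<Longrightarrow> x = 0"
    and complete: "(\<forall>N. \<exists>M. \<forall>m\<ge>M. \<forall>n\<ge>M. s m - s n \<in> F N) \<Longrightarrow> \<exists>x. flim F s x"

end

theory Submission
  imports Defs
begin


context complete_filtered_algebra
begin

lemma scale_zero_right[simp]: "scale c 0 = 0"
proof -
  have "scale c 0 = scale c 0 + scale c 0" by (metis add_0 scale_right_distrib)
  then show ?thesis by simp
qed

lemma scale_zero_left[simp]: "scale 0 x = 0"
proof -
  have "scale 0 x = scale 0 x + scale 0 x" by (metis add_0 scale_left_distrib)
  then show ?thesis by simp
qed

lemma scale_minus_right: "scale c (- x) = - scale c x"
proof -
  have "scale c x + scale c (- x) = 0" by (metis scale_right_distrib right_minus scale_zero_right)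
  then show ?thesis by (simp add: eq_neg_iff_add_eq_0 add.commute)
qed

lemma scale_minus_left: "scale (- c) x = - scale c x"
proof -
  have "scale c x + scale (- c) x = 0" by (metis scale_left_distrib right_minus scale_zero_left)
  then show ?thesis by (simp add: eq_neg_iff_add_eq_0 add.commute)
qed

lemma scale_diff: "scale c (x - y) = scale c x - scale c y"
  by (metis diff_conv_add_uminus scale_minus_right scale_right_distrib)

lemma F_uminus: "x \<in> F n \<Longrightarrow> - x \<in> F n"
  by (metis F_scale scale_minus_left scale_one)

lemma F_diff: "x \<in> F n \<Longrightarrow> y \<in> F n \<Longrightarrow> x - y \<in> F n"
  by (metis F_add F_uminus diff_conv_add_uminus)

lemma F_mono_add: "F (m + k) \<subseteq> F m"
  by (induction k) (use F_decr in auto)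

lemma F_mono: "m \<le> n \<Longrightarrow> x \<in> F n \<Longrightarrow> x \<in> F m"
  using F_mono_add[of m "n - m"] by auto

lemma F_UNIV: "x \<in> F 0" using F_0 by auto

lemma F_sum_fin: "finite A \<Longrightarrow> (\<forall>k\<in>A. f k \<in> F n) \<longrightarrow> sum f A \<in> F n"
  by (induction A rule: finite_induct) (auto simp: F_zero F_add)

lemma F_sum: "(\<And>k. k \<in> A \<Longrightarrow> f k \<in> F n) \<Longrightarrow> sum f A \<in> F n"
  using F_sum_fin[of A f n] F_zero by (cases "finite A") auto

lemma F_power: "u \<in> F i \<Longrightarrow> u ^ k \<in> F (i * k)"
proof (induction k)
  case 0 then show ?case by (simp add: F_UNIV)
next
  case (Suc k)
  then have "u * u ^ k \<in> F (i + i * k)" using F_mult by blast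
  then show ?case by simp
qed

lemma power_diff_F:
  assumes "u \<in> F 1" "v \<in> F 1" "u - v \<in> F j"
  shows "u ^ Suc k - v ^ Suc k \<in> F (j + k)"
proof (induction k)
  case 0 then show ?case using assms by simp
next
  case (Suc k)
  have eq: "u ^ Suc (Suc k) - v ^ Suc (Suc k) = u * (u ^ Suc k - v ^ Suc k) + (u - v) * v ^ Suc k"
    by (simp add: algebra_simps)
  have "u * (u ^ Suc k - v ^ Suc k) \<in> F (1 + (j + k))" using F_mult assms(1) Suc by blast
  then have 1: "u * (u ^ Suc k - v ^ Suc k) \<in> F (j + Suc k)" by simp
  have "v ^ Suc k \<in> F (1 * Suc k)" using F_power assms(2) by blast
  then have "v ^ Suc k \<in> F (Suc k)" by (simp only: mult_1)
  from F_mult[OF assms(3) this] have 2: "(u - v) * v ^ Suc k \<in> F (j + Suc k)" .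
  show ?case unfolding eq using 1 2 by (rule F_add)
qed

lemma flim_unique: "flim F s x \<Longrightarrow> flim F s y \<Longrightarrow> x = y"
proof -
  assume a: "flim F s x" "flim F s y"
  have "\<forall>N. x - y \<in> F N"
  proof
    fix N
    obtain M1 where "\<forall>n\<ge>M1. s n - x \<in> F N" using a(1) unfolding flim_def by blast
    moreover obtain M2 where "\<forall>n\<ge>M2. s n - y \<in> F N" using a(2) unfolding flim_def by blast
    ultimately have "(s (max M1 M2) - y) - (s (max M1 M2) - x) \<in> F N"
      by (intro F_diff[of "s (max M1 M2) - y"]) simp_all
    then show "x - y \<in> F N" by simp
  qed
  then show ?thesis using separated[of "x - y"] by simp
qed

lemma flim_closed: "flim F s x \<Longrightarrow> (\<And>n. s n \<in> F N) \<Longrightarrow> x \<in> F N"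
proof -
  assume a: "flim F s x" "\<And>n. s n \<in> F N"
  obtain M where "\<forall>n\<ge>M. s n - x \<in> F N" using a(1) unfolding flim_def by blast
  then have "s M - (s M - x) \<in> F N" using a(2) F_diff by blast
  then show ?thesis by simp
qed

lemma flim_diff: "flim F s x \<Longrightarrow> flim F t y \<Longrightarrow> flim F (\<lambda>n. s n - t n) (x - y)"
  unfolding flim_def
proof
  fix N
  assume a: "\<forall>N. \<exists>M. \<forall>n\<ge>M. s n - x \<in> F N" "\<forall>N. \<exists>M. \<forall>n\<ge>M. t n - y \<in> F N"
  obtain M1 where m1: "\<forall>n\<ge>M1. s n - x \<in> F N" using a(1) by blast
  obtain M2 where m2: "\<forall>n\<ge>M2. t n - y \<in> F N" using a(2) by blast
  have "\<forall>n\<ge>max M1 M2. s n - t n - (x - y) \<in> F N"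
  proof (intro allI impI)
    fix n assume "max M1 M2 \<le> n"
    then have "(s n - x) - (t n - y) \<in> F N" using m1 m2 F_diff by simp
    then show "s n - t n - (x - y) \<in> F N" by (simp add: algebra_simps)
  qed
  then show "\<exists>M. \<forall>n\<ge>M. s n - t n - (x - y) \<in> F N" by blast
qed

lemma flim_cong: "flim F s x \<Longrightarrow> (\<And>n. n \<ge> M \<Longrightarrow> t n = s n) \<Longrightarrow> flim F t x"
  unfolding flim_def
proof
  fix N
  assume a: "\<forall>N. \<exists>M. \<forall>n\<ge>M. s n - x \<in> F N" "\<And>n. n \<ge> M \<Longrightarrow> t n = s n"
  obtain M1 where m1: "\<forall>n\<ge>M1. s n - x \<in> F N" using a(1) by blast
  then have "\<forall>n\<ge>max M M1. t n - x \<in> F N" using a(2) by simp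
  then show "\<exists>M. \<forall>n\<ge>M. t n - x \<in> F N" by blast
qed

lemma flim_add_const: "flim F s x \<Longrightarrow> flim F (\<lambda>n. a + s n) (a + x)"
  unfolding flim_def by simp

lemma fseries_eq: "flim F (\<lambda>n. \<Sum>k<n. s k) x \<Longrightarrow> fseries F s = x"
  unfolding fseries_def using flim_unique by blast

lemma series_conv:
  assumes "\<And>N. \<exists>M. \<forall>k\<ge>M. s k \<in> F N"
  shows "flim F (\<lambda>n. \<Sum>k<n. s k) (fseries F s)"
proof -
  have "\<exists>x. flim F (\<lambda>n. \<Sum>k<n. s k) x"
  proof (rule complete, intro allI)
    fix N
    obtain M where M: "\<forall>k\<ge>M. s k \<in> F N" using assms by blast
    have *: "(\<Sum>k<m. s k) - (\<Sum>k<n. s k) \<in> F N" if "M \<le> n" "n \<le> m" for m n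
    proof -
      have "(\<Sum>k<m. s k) = (\<Sum>k<n. s k) + (\<Sum>k\<in>{n..<m}. s k)"
        using that sum.atLeastLessThan_concat[of 0 n m s] by (simp add: lessThan_atLeast0)
      moreover have "(\<Sum>k\<in>{n..<m}. s k) \<in> F N" using M that by (intro F_sum) auto
      ultimately show ?thesis by simp
    qed
    have "\<forall>m\<ge>M. \<forall>n\<ge>M. (\<Sum>k<m. s k) - (\<Sum>k<n. s k) \<in> F N"
    proof (intro allI impI)
      fix m n assume "M \<le> m" "M \<le> n"
      show "(\<Sum>k<m. s k) - (\<Sum>k<n. s k) \<in> F N"
      proof (cases "n \<le> m")
        case True then show ?thesis using * \<open>M \<le> n\<close> by blast
      next
        case False
        then have "(\<Sum>k<n. s k) - (\<Sum>k<m. s k) \<in> F N" using * \<open>M \<le> m\<close> by simp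
        then show ?thesis using F_uminus by fastforce
      qed
    qed
    then show "\<exists>M. \<forall>m\<ge>M. \<forall>n\<ge>M. (\<Sum>k<m. s k) - (\<Sum>k<n. s k) \<in> F N" by blast
  qed
  then obtain x where x: "flim F (\<lambda>n. \<Sum>k<n. s k) x" by blast
  then show ?thesis using fseries_eq[OF x] by simp
qed

end


context complete_filtered_algebra
begin

definition Hs :: "(nat \<Rightarrow> 'k) \<Rightarrow> 'a \<Rightarrow> nat \<Rightarrow> 'a" where
  "Hs c u k = (if k < 2 then 0 else scale (c k) (u ^ k))"

definition H :: "(nat \<Rightarrow> 'k) \<Rightarrow> 'a \<Rightarrow> 'a" where
  "H c u = fseries F (Hs c u)"

lemma H_flim:
  assumes "u \<in> F 1"
  shows "flim F (\<lambda>n. \<Sum>k<n. Hs c u k) (H c u)"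
  unfolding H_def
proof (rule series_conv)
  fix N
  have "\<forall>k\<ge>N. Hs c u k \<in> F N"
  proof (intro allI impI)
    fix k assume "N \<le> k"
    have "u ^ k \<in> F (1 * k)" using F_power assms by blast
    then have "u ^ k \<in> F N" using F_mono \<open>N \<le> k\<close> by simp
    then show "Hs c u k \<in> F N" unfolding Hs_def by (simp add: F_zero F_scale)
  qed
  then show "\<exists>M. \<forall>k\<ge>M. Hs c u k \<in> F N" by blast
qed

lemma H_in:
  assumes "u \<in> F i" "i \<ge> 1"
  shows "H c u \<in> F (2 * i)"
proof -
  have u1: "u \<in> F 1" using F_mono assms by blast
  have "Hs c u k \<in> F (2 * i)" for k
  proof (cases "k < 2")
    case False
    have "u ^ k \<in> F (i * k)" using F_power assms by blast
    moreover have "2 * i \<le> i * k" using False by simp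
    ultimately have "u ^ k \<in> F (2 * i)" by (rule F_mono[rotated])
    then show ?thesis using False unfolding Hs_def by (simp add: F_scale)
  qed (simp add: Hs_def F_zero)
  then have "(\<Sum>k<n. Hs c u k) \<in> F (2 * i)" for n by (intro F_sum)
  then show ?thesis by (rule flim_closed[OF H_flim[OF u1]])
qed

lemma H_lip:
  assumes "u \<in> F 1" "v \<in> F 1" "u - v \<in> F j"
  shows "H c u - H c v \<in> F (Suc j)"
proof -
  have fl: "flim F (\<lambda>n. (\<Sum>k<n. Hs c u k) - (\<Sum>k<n. Hs c v k)) (H c u - H c v)"
    using flim_diff[OF H_flim[OF assms(1)] H_flim[OF assms(2)]] .
  have t: "Hs c u k - Hs c v k \<in> F (Suc j)" for k
  proof (cases "k < 2")
    case False
    then obtain m where m: "k = Suc m" "m \<ge> 1" by (cases k) auto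
    have "u ^ Suc m - v ^ Suc m \<in> F (j + m)" using power_diff_F assms by blast
    moreover have "Suc j \<le> j + m" using m by simp
    ultimately have "u ^ Suc m - v ^ Suc m \<in> F (Suc j)" by (rule F_mono[rotated])
    then have "u ^ k - v ^ k \<in> F (Suc j)" using m(1) by simp
    then show ?thesis using False unfolding Hs_def by (simp add: F_scale flip: scale_diff)
  qed (simp add: Hs_def F_zero)
  have "(\<Sum>k<n. Hs c u k) - (\<Sum>k<n. Hs c v k) \<in> F (Suc j)" for n
    unfolding sum_subtractf[symmetric] using t by (intro F_sum)
  then show ?thesis by (rule flim_closed[OF fl])
qed

abbreviation "R \<equiv> H (\<lambda>k. 1 / fact k)"
abbreviation "S \<equiv> H (\<lambda>k. - (1 / of_nat k))"

lemma fexp_decomp: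
  assumes "u \<in> F 1"
  shows "fexp scale F u = 1 + (u + R u)"
proof -
  let ?t = "\<lambda>k. scale (1 / fact k) (u ^ k)"
  have eq: "(\<Sum>k<m + 2. ?t k) = 1 + u + (\<Sum>k<m + 2. Hs (\<lambda>k. 1 / fact k) u k)" for m
  proof (induction m)
    case 0 then show ?case by (simp add: Hs_def numeral_2_eq_2 scale_one)
  next
    case (Suc m)
    have "Suc m + 2 = Suc (m + 2)" by simp
    then have "(\<Sum>k<Suc m + 2. ?t k) = (\<Sum>k<m + 2. ?t k) + ?t (m + 2)"
      "(\<Sum>k<Suc m + 2. Hs (\<lambda>k. 1 / fact k) u k) = (\<Sum>k<m + 2. Hs (\<lambda>k. 1 / fact k) u k) + Hs (\<lambda>k. 1 / fact k) u (m + 2)"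
      by (simp_all only: sum.lessThan_Suc)
    moreover have "?t (m + 2) = Hs (\<lambda>k. 1 / fact k) u (m + 2)" by (simp add: Hs_def)
    ultimately show ?case using Suc.IH by (simp add: add.assoc)
  qed
  have "flim F (\<lambda>n. \<Sum>k<n. ?t k) (1 + u + R u)"
  proof (rule flim_cong[where M=2])
    show "flim F (\<lambda>n. 1 + u + (\<Sum>k<n. Hs (\<lambda>k. 1 / fact k) u k)) (1 + u + R u)"
      using flim_add_const[OF H_flim[OF assms]] .
    fix n :: nat assume "2 \<le> n"
    then obtain m where "n = m + 2" by (metis add.commute le_Suc_ex)
    then show "(\<Sum>k<n. ?t k) = 1 + u + (\<Sum>k<n. Hs (\<lambda>k. 1 / fact k) u k)" using eq by simp
  qed
  then show ?thesis unfolding fexp_def using fseries_eq by (simp add: add.assoc)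
qed

lemma flog_decomp:
  assumes "x \<in> F 1"
  shows "flog scale F (1 + x) = x + S (- x)"
proof -
  let ?t = "\<lambda>k. if k = 0 then 0 else - scale (1 / of_nat k) ((- (1 + x - 1)) ^ k)"
  have eq: "(\<Sum>k<m + 2. ?t k) = x + (\<Sum>k<m + 2. Hs (\<lambda>k. - (1 / of_nat k)) (- x) k)" for m
  proof (induction m)
    case 0 then show ?case by (simp add: Hs_def numeral_2_eq_2 scale_one scale_minus_right)
  next
    case (Suc m)
    have "Suc m + 2 = Suc (m + 2)" by simp
    then have "(\<Sum>k<Suc m + 2. ?t k) = (\<Sum>k<m + 2. ?t k) + ?t (m + 2)"
      "(\<Sum>k<Suc m + 2. Hs (\<lambda>k. - (1 / of_nat k)) (- x) k) = (\<Sum>k<m + 2. Hs (\<lambda>k. - (1 / of_nat k)) (- x) k) + Hs (\<lambda>k. - (1 / of_nat k)) (- x) (m + 2)"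
      by (simp_all only: sum.lessThan_Suc)
    moreover have "?t (m + 2) = Hs (\<lambda>k. - (1 / of_nat k)) (- x) (m + 2)" by (simp add: Hs_def scale_minus_left)
    ultimately show ?case using Suc.IH by (simp add: add.assoc)
  qed
  have mx: "- x \<in> F 1" using assms F_uminus by blast
  have "flim F (\<lambda>n. \<Sum>k<n. ?t k) (x + S (- x))"
  proof (rule flim_cong[where M=2])
    show "flim F (\<lambda>n. x + (\<Sum>k<n. Hs (\<lambda>k. - (1 / of_nat k)) (- x) k)) (x + S (- x))"
      using flim_add_const[OF H_flim[OF mx]] .
    fix n :: nat assume "2 \<le> n"
    then obtain m where "n = m + 2" by (metis add.commute le_Suc_ex)
    then show "(\<Sum>k<n. ?t k) = x + (\<Sum>k<n. Hs (\<lambda>k. - (1 / of_nat k)) (- x) k)" using eq by simp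
  qed
  then show ?thesis unfolding flog_def using fseries_eq by blast
qed

end


context complete_filtered_algebra
begin

lemma F_mono2: "x \<in> F n \<Longrightarrow> m \<le> n \<Longrightarrow> x \<in> F m"
  by (rule F_mono)

lemma e_props:
  assumes "u \<in> F i" "i \<ge> 1"
  shows "(u + R u) - u \<in> F (2 * i)" "u + R u \<in> F i"
proof -
  have r: "R u \<in> F (2 * i)" using H_in assms by blast
  then show "(u + R u) - u \<in> F (2 * i)" by simp
  have "R u \<in> F i" using F_mono2[OF r] by simp
  then show "u + R u \<in> F i" using assms(1) by (rule F_add[rotated])
qed

lemma e_lip:
  assumes "u \<in> F 1" "v \<in> F 1" "u - v \<in> F j"
  shows "(u + R u) - (v + R v) - (u - v) \<in> F (Suc j)" "(u + R u) - (v + R v) \<in> F j"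
proof -
  have r: "R u - R v \<in> F (Suc j)" using H_lip assms by blast
  then show "(u + R u) - (v + R v) - (u - v) \<in> F (Suc j)" by (simp add: algebra_simps)
  have "R u - R v \<in> F j" using F_mono2[OF r] by simp
  then have "(u - v) + (R u - R v) \<in> F j" using assms(3) by (rule F_add[rotated])
  then show "(u + R u) - (v + R v) \<in> F j" by (simp add: algebra_simps)
qed

lemma Phi_eq:
  assumes "p \<in> F 1" "q \<in> F 1"
  defines "X \<equiv> (p + R p) + (q + R q) + (p + R p) * (q + R q)"
  shows "fC scale F p q = X + S (- X)" "X \<in> F 1"
proof -
  have ep: "p + R p \<in> F 1" and eq: "q + R q \<in> F 1" using e_props assms(1,2) by auto
  have "(p + R p) * (q + R q) \<in> F (1 + 1)" using F_mult[OF ep eq] .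
  then have "(p + R p) * (q + R q) \<in> F 1" using F_mono2 by simp
  then show X1: "X \<in> F 1" unfolding X_def using F_add[OF F_add[OF ep eq]] by blast
  have "fexp scale F p * fexp scale F q = (1 + (p + R p)) * (1 + (q + R q))"
    using fexp_decomp assms by simp
  also have "\<dots> = 1 + X" unfolding X_def by (simp add: algebra_simps)
  finally show "fC scale F p q = X + S (- X)" unfolding fC_def using flog_decomp[OF X1] by simp
qed

lemma Phi_props:
  fixes P :: "'a \<Rightarrow> 'a"
  assumes P_add: "\<And>x y. P (x + y) = P x + P y"
    and P_filt: "\<And>n x. x \<in> F n \<Longrightarrow> P x \<in> F n"
  shows "\<And>i a. i \<ge> 1 \<Longrightarrow> a \<in> F i \<Longrightarrow> fC scale F (P a) (a - P a) - a \<in> F (2 * i)"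
    and "\<And>a b j. a \<in> F 1 \<Longrightarrow> b \<in> F 1 \<Longrightarrow> a - b \<in> F j \<Longrightarrow>
           fC scale F (P a) (a - P a) - fC scale F (P b) (b - P b) - (a - b) \<in> F (Suc j)"
proof -
  have P_diff: "P (x - y) = P x - P y" for x y
    by (metis P_add add_diff_cancel_right' diff_add_cancel eq_diff_eq)
  fix i a
  assume i: "i \<ge> 1" and a: "a \<in> F i"
  let ?p = "P a" and ?q = "a - P a"
  have p: "?p \<in> F i" using P_filt a by blast
  have q: "?q \<in> F i" using F_diff a p by blast
  have p1: "?p \<in> F 1" using F_mono2[OF p i] .
  have q1: "?q \<in> F 1" using F_mono2[OF q i] .
  define X where "X = (?p + R ?p) + (?q + R ?q) + (?p + R ?p) * (?q + R ?q)"
  have Phi: "fC scale F ?p ?q = X + S (- X)" "X \<in> F 1" using Phi_eq[OF p1 q1] unfolding X_def by auto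
  have e1: "(?p + R ?p) - ?p \<in> F (2 * i)" "?p + R ?p \<in> F i" using e_props[OF p i] by auto
  have e2: "(?q + R ?q) - ?q \<in> F (2 * i)" "?q + R ?q \<in> F i" using e_props[OF q i] by auto
  have pr: "(?p + R ?p) * (?q + R ?q) \<in> F (i + i)" using F_mult[OF e1(2) e2(2)] .
  have "((?p + R ?p) - ?p) + ((?q + R ?q) - ?q) + (?p + R ?p) * (?q + R ?q) \<in> F (2 * i)"
    using e1(1) e2(1) pr by (intro F_add) (simp_all add: mult_2)
  then have Xa: "X - a \<in> F (2 * i)" unfolding X_def by (simp add: algebra_simps)
  have "X - a \<in> F i" using F_mono2[OF Xa] by simp
  then have "(X - a) + a \<in> F i" using a by (rule F_add)
  then have "X \<in> F i" by simp
  then have "- X \<in> F i" by (rule F_uminus)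
  then have "S (- X) \<in> F (2 * i)" using H_in i by blast
  then have "(X - a) + S (- X) \<in> F (2 * i)" using Xa by (intro F_add)
  then show "fC scale F (P a) (a - P a) - a \<in> F (2 * i)" using Phi(1) by (simp add: algebra_simps)
next
  have P_diff: "P (x - y) = P x - P y" for x y
    by (metis P_add add_diff_cancel_right' diff_add_cancel eq_diff_eq)
  fix a b j
  assume a: "a \<in> F 1" and b: "b \<in> F 1" and ab: "a - b \<in> F j"
  let ?p = "P a" and ?q = "a - P a" and ?p' = "P b" and ?q' = "b - P b"
  have p: "?p \<in> F 1" using P_filt a by blast
  have q: "?q \<in> F 1" using F_diff a p by blast
  have p': "?p' \<in> F 1" using P_filt b by blast
  have q': "?q' \<in> F 1" using F_diff b p' by blast
  have pp: "?p - ?p' \<in> F j" using P_filt[OF ab] P_diff by simp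
  have qq: "?q - ?q' \<in> F j"
  proof -
    have "(a - b) - (?p - ?p') \<in> F j" using ab pp by (rule F_diff)
    then show ?thesis by (simp add: algebra_simps)
  qed
  define X where "X = (?p + R ?p) + (?q + R ?q) + (?p + R ?p) * (?q + R ?q)"
  define X' where "X' = (?p' + R ?p') + (?q' + R ?q') + (?p' + R ?p') * (?q' + R ?q')"
  have Phi: "fC scale F ?p ?q = X + S (- X)" "X \<in> F 1" using Phi_eq[OF p q] unfolding X_def by auto
  have Phi': "fC scale F ?p' ?q' = X' + S (- X')" "X' \<in> F 1" using Phi_eq[OF p' q'] unfolding X'_def by auto
  have l1: "(?p + R ?p) - (?p' + R ?p') - (?p - ?p') \<in> F (Suc j)" "(?p + R ?p) - (?p' + R ?p') \<in> F j"
    using e_lip[OF p p' pp] by auto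
  have l2: "(?q + R ?q) - (?q' + R ?q') - (?q - ?q') \<in> F (Suc j)" "(?q + R ?q) - (?q' + R ?q') \<in> F j"
    using e_lip[OF q q' qq] by auto
  have ep': "?p' + R ?p' \<in> F 1" and eq: "?q + R ?q \<in> F 1" using e_props p' q by auto
  have m1: "((?p + R ?p) - (?p' + R ?p')) * (?q + R ?q) \<in> F (j + 1)" using F_mult[OF l1(2) eq] .
  have m2: "(?p' + R ?p') * ((?q + R ?q) - (?q' + R ?q')) \<in> F (1 + j)" using F_mult[OF ep' l2(2)] .
  have "((?p + R ?p) - (?p' + R ?p') - (?p - ?p')) + ((?q + R ?q) - (?q' + R ?q') - (?q - ?q'))
        + (((?p + R ?p) - (?p' + R ?p')) * (?q + R ?q) + (?p' + R ?p') * ((?q + R ?q) - (?q' + R ?q')))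
        \<in> F (Suc j)"
    using l1(1) l2(1) m1 m2 by (intro F_add) simp_all
  then have D: "X - X' - (a - b) \<in> F (Suc j)" unfolding X_def X'_def by (simp add: algebra_simps)
  have "X - X' - (a - b) \<in> F j" using F_mono2[OF D] by simp
  then have "(X - X' - (a - b)) + (a - b) \<in> F j" using ab by (rule F_add)
  then have "X - X' \<in> F j" by simp
  then have "- (X - X') \<in> F j" by (rule F_uminus)
  then have "(- X) - (- X') \<in> F j" by (simp add: algebra_simps)
  then have "S (- X) - S (- X') \<in> F (Suc j)" using H_lip F_uminus Phi(2) Phi'(2) by blast
  then have "(X - X' - (a - b)) + (S (- X) - S (- X')) \<in> F (Suc j)" using D by (intro F_add)
  then show "fC scale F (P a) (a - P a) - fC scale F (P b) (b - P b) - (a - b) \<in> F (Suc j)"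
    using Phi(1) Phi'(1) by (simp add: algebra_simps)
qed

end


context complete_filtered_algebra
begin

lemma Phi_bij:
  fixes \<Phi> :: "'a \<Rightarrow> 'a"
  assumes A3: "\<And>i a. i \<ge> 1 \<Longrightarrow> a \<in> F i \<Longrightarrow> \<Phi> a - a \<in> F (2 * i)"
    and L: "\<And>a b j. a \<in> F 1 \<Longrightarrow> b \<in> F 1 \<Longrightarrow> a - b \<in> F j \<Longrightarrow> \<Phi> a - \<Phi> b - (a - b) \<in> F (Suc j)"
  shows "bij_betw \<Phi> (F 1) (F 1)"
proof -
  have into: "\<Phi> a \<in> F 1" if "a \<in> F 1" for a
  proof -
    have "\<Phi> a - a \<in> F (2 * 1)" using A3 that by blast
    then have "\<Phi> a - a \<in> F 1" using F_mono2 by simp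
    then have "(\<Phi> a - a) + a \<in> F 1" using that by (rule F_add)
    then show ?thesis by simp
  qed
  have inj: "inj_on \<Phi> (F 1)"
  proof (rule inj_onI)
    fix a b assume a: "a \<in> F 1" and b: "b \<in> F 1" and e: "\<Phi> a = \<Phi> b"
    have "a - b \<in> F j" for j
    proof (induction j)
      case 0 then show ?case by (rule F_UNIV)
    next
      case (Suc j)
      have "\<Phi> a - \<Phi> b - (a - b) \<in> F (Suc j)" using L a b Suc by blast
      then have "- (a - b) \<in> F (Suc j)" using e by simp
      then show ?case using F_uminus by fastforce
    qed
    then show "a = b" using separated[of "a - b"] by simp
  qed
  have surj: "c \<in> \<Phi> ` F 1" if c: "c \<in> F 1" for c
  proof -
    define b where "b = (\<lambda>n. ((\<lambda>x. x + (c - \<Phi> x)) ^^ n) c)"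
    have b0: "b 0 = c" unfolding b_def by simp
    have bS: "b (Suc n) = b n + (c - \<Phi> (b n))" for n unfolding b_def by simp
    have inv: "b n \<in> F 1 \<and> c - \<Phi> (b n) \<in> F (Suc n)" for n
    proof (induction n)
      case 0
      have "\<Phi> c - c \<in> F (2 * 1)" using A3 c by blast
      then have "- (\<Phi> c - c) \<in> F 1" using F_mono2 F_uminus by fastforce
      then show ?case using b0 c by simp
    next
      case (Suc n)
      then have bn: "b n \<in> F 1" and dn: "c - \<Phi> (b n) \<in> F (Suc n)" by auto
      have dn1: "c - \<Phi> (b n) \<in> F 1" using F_mono2[OF dn] by simp
      have b1: "b (Suc n) \<in> F 1" unfolding bS using bn dn1 by (rule F_add)
      have "b (Suc n) - b n \<in> F (Suc n)" using dn bS by simp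
      then have "\<Phi> (b (Suc n)) - \<Phi> (b n) - (b (Suc n) - b n) \<in> F (Suc (Suc n))"
        using L b1 bn by blast
      then have "- (\<Phi> (b (Suc n)) - \<Phi> (b n) - (b (Suc n) - b n)) \<in> F (Suc (Suc n))"
        by (rule F_uminus)
      moreover have "- (\<Phi> (b (Suc n)) - \<Phi> (b n) - (b (Suc n) - b n)) = c - \<Phi> (b (Suc n))"
        unfolding bS by (simp add: algebra_simps)
      ultimately have "c - \<Phi> (b (Suc n)) \<in> F (Suc (Suc n))" by metis
      then show ?case using b1 by simp
    qed
    have cauchy: "b (n + k) - b n \<in> F (Suc n)" for n k
    proof (induction k)
      case 0 then show ?case by (simp add: F_zero)
    next
      case (Suc k)
      have "c - \<Phi> (b (n + k)) \<in> F (Suc (n + k))" using inv by blast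
      then have "c - \<Phi> (b (n + k)) \<in> F (Suc n)" using F_mono2 by simp
      then have "(b (n + k) - b n) + (c - \<Phi> (b (n + k))) \<in> F (Suc n)" using Suc by (intro F_add)
      moreover have "(b (n + k) - b n) + (c - \<Phi> (b (n + k))) = b (n + Suc k) - b n"
        using bS[of "n + k"] by (simp add: algebra_simps)
      ultimately show ?case by metis
    qed
    have "\<exists>x. flim F b x"
    proof (rule complete, intro allI)
      fix N
      have "\<forall>m\<ge>N. \<forall>n\<ge>N. b m - b n \<in> F N"
      proof (intro allI impI)
        fix m n assume m: "N \<le> m" and n: "N \<le> n"
        show "b m - b n \<in> F N"
        proof (cases "n \<le> m")
          case True
          then obtain k where "m = n + k" using le_Suc_ex by blast
          then have "b m - b n \<in> F (Suc n)" using cauchy by simp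
          then show ?thesis using F_mono2 n by simp
        next
          case False
          then obtain k where "n = m + k" using le_Suc_ex[of m n] by auto
          then have "b n - b m \<in> F (Suc m)" using cauchy by simp
          then have "b n - b m \<in> F N" using F_mono2 m by simp
          then have "- (b n - b m) \<in> F N" by (rule F_uminus)
          then show ?thesis by simp
        qed
      qed
      then show "\<exists>M. \<forall>m\<ge>M. \<forall>n\<ge>M. b m - b n \<in> F N" by blast
    qed
    then obtain x where x: "flim F b x" by blast
    have x1: "x \<in> F 1" using flim_closed[OF x] inv by blast
    have "c - \<Phi> x \<in> F N" for N
    proof -
      obtain M where M: "\<forall>n\<ge>M. b n - x \<in> F N" using x unfolding flim_def by blast
      define n where "n = max M N"
      have bx: "b n - x \<in> F N" using M n_def by simp
      have "\<Phi> (b n) - \<Phi> x - (b n - x) \<in> F (Suc N)" using L inv x1 bx by blast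
      then have "\<Phi> (b n) - \<Phi> x - (b n - x) \<in> F N" using F_mono2 by simp
      then have "(\<Phi> (b n) - \<Phi> x - (b n - x)) + (b n - x) \<in> F N" using bx by (rule F_add)
      then have 1: "\<Phi> (b n) - \<Phi> x \<in> F N" by simp
      have "c - \<Phi> (b n) \<in> F (Suc n)" using inv by blast
      then have 2: "c - \<Phi> (b n) \<in> F N" using F_mono2 n_def by simp
      have "(c - \<Phi> (b n)) + (\<Phi> (b n) - \<Phi> x) \<in> F N" using 2 1 by (rule F_add)
      then show ?thesis by simp
    qed
    then have "c = \<Phi> x" using separated[of "c - \<Phi> x"] by simp
    then show ?thesis using x1 by blast
  qed
  show ?thesis unfolding bij_betw_def using inj into surj by blast
qed

end

theorem proposition2p1:
  fixes scale :: "'k::field_char_0 \<Rightarrow> 'a::ring_1 \<Rightarrow> 'a"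
    and F :: "nat \<Rightarrow> 'a set"
    and P :: "'a \<Rightarrow> 'a"
  assumes A: "complete_filtered_algebra scale F"
    and P_add: "\<And>x y. P (x + y) = P x + P y"
    and P_scale: "\<And>c x. P (scale c x) = scale c (P x)"
    and P_filt: "\<And>n. P ` F n \<subseteq> F n"
  shows "\<exists>\<chi>. \<chi> ` F 1 \<subseteq> F 1
          \<and> (\<forall>i\<ge>1. \<forall>a\<in>F i. \<chi> a - a \<in> F (2 * i))
          \<and> (\<forall>a\<in>F 1. a = fC scale F (P (\<chi> a)) (\<chi> a - P (\<chi> a)))
          \<and> (\<forall>\<psi>. (\<psi> ` F 1 \<subseteq> F 1
                   \<and> (\<forall>i\<ge>1. \<forall>a\<in>F i. \<psi> a - a \<in> F (2 * i))
                   \<and> (\<forall>a\<in>F 1. a = fC scale F (P (\<psi> a)) (\<psi> a - P (\<psi> a))))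
                 \<longrightarrow> (\<forall>a\<in>F 1. \<psi> a = \<chi> a))
          \<and> bij_betw \<chi> (F 1) (F 1)
          \<and> (\<forall>a\<in>F 1. the_inv_into (F 1) \<chi> a = fC scale F (P a) (a - P a))"
proof -
  interpret complete_filtered_algebra scale F by (rule A)
  have Pf: "\<And>n x. x \<in> F n \<Longrightarrow> P x \<in> F n" using P_filt by blast
  define \<Phi> where "\<Phi> = (\<lambda>a. fC scale F (P a) (a - P a))"
  have A3: "\<And>i a. i \<ge> 1 \<Longrightarrow> a \<in> F i \<Longrightarrow> \<Phi> a - a \<in> F (2 * i)"
    unfolding \<Phi>_def using Phi_props(1)[OF P_add Pf] by blast
  have L: "\<And>a b j. a \<in> F 1 \<Longrightarrow> b \<in> F 1 \<Longrightarrow> a - b \<in> F j \<Longrightarrow> \<Phi> a - \<Phi> b - (a - b) \<in> F (Suc j)"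
    unfolding \<Phi>_def using Phi_props(2)[OF P_add Pf] by blast
  have bij: "bij_betw \<Phi> (F 1) (F 1)" using Phi_bij[OF A3 L] by blast
  have inj: "inj_on \<Phi> (F 1)" using bij bij_betw_imp_inj_on by blast
  have img: "\<Phi> ` F 1 = F 1" using bij bij_betw_imp_surj_on by blast
  define \<chi> where "\<chi> = the_inv_into (F 1) \<Phi>"
  have chi_in: "\<chi> a \<in> F 1" if "a \<in> F 1" for a
    unfolding \<chi>_def using the_inv_into_into[OF inj] img that by blast
  have chi_eq: "\<Phi> (\<chi> a) = a" if "a \<in> F 1" for a
    unfolding \<chi>_def using f_the_inv_into_f[OF inj] img that by blast
  have bijc: "bij_betw \<chi> (F 1) (F 1)" unfolding \<chi>_def using bij_betw_the_inv_into[OF bij] .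
  have injc: "inj_on \<chi> (F 1)" using bijc bij_betw_imp_inj_on by blast
  have part2: "\<chi> a - a \<in> F (2 * i)" if i: "i \<ge> 1" and a: "a \<in> F i" for i a
  proof -
    have a1: "a \<in> F 1" using F_mono2[OF a i] .
    let ?b = "\<chi> a"
    have b1: "?b \<in> F 1" using chi_in a1 .
    have pb: "\<Phi> ?b = a" using chi_eq a1 .
    have "\<forall>j. 1 \<le> j \<longrightarrow> j \<le> i \<longrightarrow> ?b \<in> F j"
    proof (intro allI)
      fix j show "1 \<le> j \<longrightarrow> j \<le> i \<longrightarrow> ?b \<in> F j"
      proof (induction j)
        case 0 then show ?case by simp
      next
        case (Suc j)
        show ?case
        proof (cases "j = 0")
          case True then show ?thesis using b1 by simp
        next
          case False
          show ?thesis
          proof (intro impI)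
            assume "Suc j \<le> i"
            then have bj: "?b \<in> F j" using Suc False by simp
            have "\<Phi> ?b - ?b \<in> F (2 * j)" using A3 bj False by simp
            then have d: "\<Phi> ?b - ?b \<in> F (Suc j)" using F_mono2 False by simp
            have "a \<in> F (Suc j)" using F_mono2[OF a \<open>Suc j \<le> i\<close>] .
            then have "a - (\<Phi> ?b - ?b) \<in> F (Suc j)" using d by (rule F_diff)
            then show "?b \<in> F (Suc j)" using pb by simp
          qed
        qed
      qed
    qed
    then have bi: "?b \<in> F i" using i by simp
    have "\<Phi> ?b - ?b \<in> F (2 * i)" using A3 bi i by blast
    then have "- (\<Phi> ?b - ?b) \<in> F (2 * i)" by (rule F_uminus)
    then show ?thesis using pb by simp
  qed
  show ?thesis
  proof (rule exI[of _ \<chi>], intro conjI)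
    show "\<chi> ` F 1 \<subseteq> F 1" using chi_in by blast
    show "\<forall>i\<ge>1. \<forall>a\<in>F i. \<chi> a - a \<in> F (2 * i)" using part2 by blast
    show "\<forall>a\<in>F 1. a = fC scale F (P (\<chi> a)) (\<chi> a - P (\<chi> a))"
      using chi_eq unfolding \<Phi>_def by simp
    show "\<forall>\<psi>. (\<psi> ` F 1 \<subseteq> F 1
                   \<and> (\<forall>i\<ge>1. \<forall>a\<in>F i. \<psi> a - a \<in> F (2 * i))
                   \<and> (\<forall>a\<in>F 1. a = fC scale F (P (\<psi> a)) (\<psi> a - P (\<psi> a))))
                 \<longrightarrow> (\<forall>a\<in>F 1. \<psi> a = \<chi> a)"
    proof (intro allI impI ballI)
      fix \<psi> a
      assume h: "\<psi> ` F 1 \<subseteq> F 1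
                   \<and> (\<forall>i\<ge>1. \<forall>a\<in>F i. \<psi> a - a \<in> F (2 * i))
                   \<and> (\<forall>a\<in>F 1. a = fC scale F (P (\<psi> a)) (\<psi> a - P (\<psi> a)))"
        and a: "a \<in> F 1"
      have "\<psi> a \<in> F 1" using h a by blast
      moreover have "\<Phi> (\<psi> a) = a" using h a unfolding \<Phi>_def by auto
      ultimately show "\<psi> a = \<chi> a" unfolding \<chi>_def using the_inv_into_f_eq[OF inj] by metis
    qed
    show "bij_betw \<chi> (F 1) (F 1)" by (rule bijc)
    show "\<forall>a\<in>F 1. the_inv_into (F 1) \<chi> a = fC scale F (P a) (a - P a)"
    proof
      fix a assume a: "a \<in> F 1"
      have "\<chi> (\<Phi> a) = a" unfolding \<chi>_def using the_inv_into_f_f[OF inj a] .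
      moreover have "\<Phi> a \<in> F 1" using img a by blast
      ultimately have "the_inv_into (F 1) \<chi> a = \<Phi> a" using the_inv_into_f_eq[OF injc] by blast
      then show "the_inv_into (F 1) \<chi> a = fC scale F (P a) (a - P a)" unfolding \<Phi>_def .
    qed
  qed
qed


end
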